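(* Let $p$ be a prime and $a,b$ integers with $\binom{a}{b}\ne0$. Then $\binom{ap}{bp}/\binom{a}{b}$ is a rational number that is congruent to $\varepsilon$ modulo $p^q$ (i.e. the difference lies in $p^q\mathbb{Z}_{(p)}$), where $q$ is the exponent of the exact power of $p$ dividing $p^3ab(a-b)/12$ (if $ab(a-b)=0$ the ratio equals $\varepsilon=1$ exactly), and where $\varepsilon=1$ unless $p=2$ and $(a,b)\equiv(0,1)\pmod 2$, in which case $\varepsilon=-1$.
   Context: For all integers $n, k$, the binomial coefficient is defined by $\binom{n}{k} = \lim_{z \to 0} \frac{\Gamma(z+n+1)}{\Gamma(z+k+1)\Gamma(z+n-k+1)}$; this is a finite integer for all $n,k\in\mathbb{Z}$, agrees with the usual one for $n\ge0$, and satisfies $\binom{n}{k}=\binom{n}{n-k}$. *)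

theory Defs
  imports "HOL-Analysis.Analysis"
begin

definition ibinom :: "int \<Rightarrow> int \<Rightarrow> real" where
  "ibinom n k = Lim (at (0::real))
     (\<lambda>z. Gamma (z + of_int n + 1) / (Gamma (z + of_int k + 1) * Gamma (z + of_int (n - k) + 1)))"

end

theory Submission
  imports Defs "HOL-Number_Theory.Number_Theory"
begin

definition cb :: "int \<Rightarrow> int \<Rightarrow> real" where
  "cb n k = (if 0 \<le> k \<and> k \<le> n then real (nat n choose nat k)
     else if n < 0 \<and> 0 \<le> k then (-1) ^ nat k * real (nat (k - n - 1) choose nat k)
     else if n < 0 \<and> k \<le> n then (-1) ^ nat (n - k) * real (nat (- k - 1) choose nat (n - k))
     else 0)"

lemma not_Int_small: "0 < \<bar>z::real\<bar> \<Longrightarrow> \<bar>z\<bar> < 1 \<Longrightarrow> z + of_int m \<notin> \<int>"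
proof
  assume a: "0 < \<bar>z\<bar>" "\<bar>z\<bar> < 1" "z + of_int m \<in> \<int>"
  then obtain j where "z + of_int m = of_int j" by (auto elim: Ints_cases)
  hence z: "z = of_int (j - m)" by simp
  show False
  proof (cases "j - m = 0")
    case True with z a show False by simp
  next
    case False
    hence "\<bar>j - m\<bar> \<ge> 1" by linarith
    hence "\<bar>real_of_int (j - m)\<bar> \<ge> 1" by linarith
    with z a show False by simp
  qed
qed

lemma Gamma_shift_nat: "w \<notin> \<int> \<Longrightarrow> Gamma (w + of_nat n) = pochhammer w n * Gamma (w::real)"
proof (induction n)
  case 0 then show ?case by simp
next
  case (Suc n)
  have "w + of_nat n \<notin> \<int>\<^sub>\<le>\<^sub>0"
  proof
    assume "w + of_nat n \<in> \<int>\<^sub>\<le>\<^sub>0"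
    hence "w + of_nat n \<in> \<int>" using nonpos_Ints_subset_Ints by blast
    hence "w + of_nat n - of_nat n \<in> \<int>" by (intro Ints_diff) auto
    with Suc.prems show False by (simp del: of_nat_Suc)
  qed
  hence "Gamma (w + of_nat n + 1) = (w + of_nat n) * Gamma (w + of_nat n)" by (rule Gamma_plus1)
  thus ?case using Suc by (simp add: pochhammer_rec' add.assoc add.commute[of 1] mult.assoc)
qed

lemma poch_nz: "w \<notin> \<int> \<Longrightarrow> pochhammer (w::real) n \<noteq> 0"
  by (auto simp: pochhammer_eq_0_iff)

lemma Gamma_nz: "w \<notin> \<int> \<Longrightarrow> Gamma (w::real) \<noteq> 0"
  by (auto simp: Gamma_eq_zero_iff nonpos_Ints_def)

definition Qf :: "int \<Rightarrow> real \<Rightarrow> real" where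
  "Qf m z = (if 0 \<le> m then pochhammer (z + 1) (nat m) else 1 / pochhammer (z + of_int m + 1) (nat (- m)))"

lemma Gamma_Qf:
  assumes "0 < \<bar>z::real\<bar>" "\<bar>z\<bar> < 1"
  shows "Gamma (z + of_int m + 1) = Gamma (z + 1) * Qf m z"
proof (cases "0 \<le> m")
  case True
  have "z + 1 \<notin> \<int>" using not_Int_small[OF assms, of 1] by simp
  from Gamma_shift_nat[OF this, of "nat m"] True show ?thesis
    by (simp add: Qf_def algebra_simps)
next
  case False
  have ni: "z + of_int m + 1 \<notin> \<int>" using not_Int_small[OF assms, of "m + 1"] by (simp add: add.assoc)
  from Gamma_shift_nat[OF ni, of "nat (-m)"] False
  have "Gamma (z + 1) = pochhammer (z + of_int m + 1) (nat (- m)) * Gamma (z + of_int m + 1)"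
    by simp
  with poch_nz[OF ni, of "nat (-m)"] False show ?thesis by (simp add: Qf_def field_simps)
qed

definition Fg :: "int \<Rightarrow> int \<Rightarrow> real \<Rightarrow> real" where
  "Fg n k z = Gamma (z + of_int n + 1) / (Gamma (z + of_int k + 1) * Gamma (z + of_int (n - k) + 1))"

lemma ibinom_Fg: "ibinom n k = Lim (at 0) (Fg n k)"
  unfolding ibinom_def Fg_def by simp

lemma Fg_sym: "Fg n k = Fg n (n - k)"
  unfolding Fg_def by (auto simp: mult.commute fun_eq_iff)

lemma Fg_Qf:
  assumes "0 < \<bar>z::real\<bar>" "\<bar>z\<bar> < 1"
  shows "Fg n k z = Qf n z / (Gamma (z + 1) * Qf k z * Qf (n - k) z)"
proof -
  have "z + 1 \<notin> \<int>" using not_Int_small[OF assms, of 1] by simp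
  hence "Gamma (z + 1) \<noteq> 0" by (rule Gamma_nz)
  thus ?thesis unfolding Fg_def Gamma_Qf[OF assms] by (simp add: field_simps)
qed

lemma Lim_helper:
  assumes "\<And>z. 0 < \<bar>z::real\<bar> \<Longrightarrow> \<bar>z\<bar> < 1 \<Longrightarrow> f z = g z" "isCont g 0"
  shows "Lim (at 0) f = g 0"
proof -
  have ev: "eventually (\<lambda>z. g z = f z) (at (0::real))"
    unfolding eventually_at by (rule exI[of _ 1]) (auto simp: assms(1) dist_real_def)
  have "(g \<longlongrightarrow> g 0) (at 0)" using assms(2) by (simp add: isCont_def)
  from Lim_transform_eventually[OF this ev] have "(f \<longlongrightarrow> g 0) (at 0)" .
  thus ?thesis by (rule tendsto_Lim[rotated]) simp
qed

lemma isCont_poch_shift: "isCont (\<lambda>x::real. pochhammer (x + c) m) a"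
  by (rule isCont_o2[OF _ isCont_pochhammer]) (intro continuous_intros)

lemma isCont_poch_shift2: "isCont (\<lambda>x::real. pochhammer (x + c + 1) m) a"
  by (rule isCont_o2[OF _ isCont_pochhammer]) (intro continuous_intros)

lemma isCont_Gamma1: "isCont (\<lambda>z::real. Gamma (z + 1)) 0"
  by (rule isCont_o2[OF _ isCont_Gamma]) (auto intro!: continuous_intros)

lemma caseA:
  assumes "0 \<le> k" "k \<le> n"
  shows "ibinom n k = real (nat n choose nat k)"
proof -
  let ?g = "\<lambda>z::real. pochhammer (z + 1) (nat n) / (Gamma (z + 1) * pochhammer (z + 1) (nat k) * pochhammer (z + 1) (nat (n - k)))"
  have "ibinom n k = ?g 0"
    unfolding ibinom_Fg
  proof (rule Lim_helper)
    fix z :: real assume "0 < \<bar>z\<bar>" "\<bar>z\<bar> < 1"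
    thus "Fg n k z = ?g z" using assms by (simp add: Fg_Qf Qf_def)
  next
    have "pochhammer (1::real) m \<noteq> 0" for m by (simp add: pochhammer_fact[symmetric])
    thus "isCont ?g 0"
      by (intro isCont_divide isCont_mult isCont_Gamma1 isCont_poch_shift isCont_poch_shift2) auto
  qed
  also have "\<dots> = fact (nat n) / (fact (nat k) * fact (nat (n - k)))"
    by (simp add: pochhammer_fact[symmetric])
  also have "\<dots> = real (nat n choose nat k)"
    using assms by (subst binomial_fact) (auto simp: nat_diff_distrib)
  finally show ?thesis .
qed

lemma poch_nz_small: "0 < \<bar>z::real\<bar> \<Longrightarrow> \<bar>z\<bar> < 1 \<Longrightarrow> pochhammer (z + of_int m + 1) j \<noteq> 0"
  using poch_nz not_Int_small[of z "m + 1"] by (simp add: add.assoc)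

lemma poch_nz_small1: "0 < \<bar>z::real\<bar> \<Longrightarrow> \<bar>z\<bar> < 1 \<Longrightarrow> pochhammer (z + 1) j \<noteq> 0"
  using poch_nz_small[of z 0] by simp

lemma Gamma1_nz: "Gamma (1::real) \<noteq> 0" by simp

lemma caseB:
  assumes "n < 0" "0 \<le> k"
  shows "ibinom n k = (-1) ^ nat k * real (nat (k - n - 1) choose nat k)"
proof -
  let ?g = "\<lambda>z::real. pochhammer (z + of_int (n - k) + 1) (nat k) / (Gamma (z + 1) * pochhammer (z + 1) (nat k))"
  have "ibinom n k = ?g 0"
    unfolding ibinom_Fg
  proof (rule Lim_helper)
    fix z :: real assume z: "0 < \<bar>z\<bar>" "\<bar>z\<bar> < 1"
    have split: "pochhammer (z + of_int (n - k) + 1) (nat (k - n)) =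
        pochhammer (z + of_int (n - k) + 1) (nat k) * pochhammer (z + of_int n + 1) (nat (- n))"
    proof -
      have "nat (k - n) = nat k + nat (- n)" using assms by simp
      hence "pochhammer (z + of_int (n - k) + 1) (nat (k - n)) =
        pochhammer (z + of_int (n - k) + 1) (nat k) * pochhammer (z + of_int (n - k) + 1 + of_nat (nat k)) (nat (- n))"
        by (simp add: pochhammer_product')
      also have "z + of_int (n - k) + 1 + of_nat (nat k) = z + of_int n + 1" using assms by simp
      finally show ?thesis .
    qed
    have q: "Qf n z = 1 / pochhammer (z + of_int n + 1) (nat (- n))"
      "Qf k z = pochhammer (z + 1) (nat k)"
      "Qf (n - k) z = 1 / pochhammer (z + of_int (n - k) + 1) (nat (k - n))"
      using assms by (auto simp: Qf_def)
    have G: "Gamma (z + 1) \<noteq> 0" using Gamma_nz not_Int_small[OF z, of 1] by simp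
    show "Fg n k z = ?g z" unfolding Fg_Qf[OF z] q split
      using poch_nz_small[OF z, of n "nat (-n)"]
        poch_nz_small[OF z, of "n - k" "nat k"] poch_nz_small1[OF z, of "nat k"] G
      by (simp add: field_simps)
  next
    have "pochhammer (1::real) m \<noteq> 0" for m by (simp add: pochhammer_fact[symmetric])
    thus "isCont ?g 0"
      by (intro isCont_divide isCont_mult isCont_Gamma1 isCont_poch_shift isCont_poch_shift2) auto
  qed
  also have "\<dots> = (of_int n gchoose (nat k))"
    using assms by (simp add: pochhammer_fact[symmetric] gbinomial_pochhammer')
  also have "\<dots> = (-1) ^ nat k * real (nat (k - n - 1) choose nat k)"
  proof -
    have "(of_int n :: real) = - of_int (- n)" by simp
    hence "(of_int n gchoose (nat k)) = (-1) ^ nat k * ((of_int (-n) + of_nat (nat k) - 1 :: real) gchoose nat k)"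
      by (metis gbinomial_minus)
    also have "(of_int (-n) + of_nat (nat k) - 1 :: real) = of_nat (nat (k - n - 1))" using assms by simp
    finally show ?thesis by (simp add: binomial_gbinomial)
  qed
  finally show ?thesis .
qed

lemma caseD:
  assumes "0 \<le> n" "k < 0"
  shows "ibinom n k = 0"
proof -
  let ?g = "\<lambda>z::real. pochhammer (z + 1) (nat n) * pochhammer (z + of_int k + 1) (nat (-k)) / (Gamma (z + 1) * pochhammer (z + 1) (nat (n - k)))"
  have "ibinom n k = ?g 0"
    unfolding ibinom_Fg
  proof (rule Lim_helper)
    fix z :: real assume z: "0 < \<bar>z\<bar>" "\<bar>z\<bar> < 1"
    have q: "Qf n z = pochhammer (z + 1) (nat n)"
      "Qf k z = 1 / pochhammer (z + of_int k + 1) (nat (- k))"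
      "Qf (n - k) z = pochhammer (z + 1) (nat (n - k))"
      using assms by (auto simp: Qf_def)
    have G: "Gamma (z + 1) \<noteq> 0" using Gamma_nz not_Int_small[OF z, of 1] by simp
    show "Fg n k z = ?g z" unfolding Fg_Qf[OF z] q
      using poch_nz_small[OF z, of k "nat (-k)"]
        poch_nz_small1[OF z, of "nat (n - k)"] poch_nz_small1[OF z, of "nat n"] G
      by (simp add: field_simps)
  next
    have "pochhammer (1::real) m \<noteq> 0" for m by (simp add: pochhammer_fact[symmetric])
    thus "isCont ?g 0"
      by (intro isCont_divide isCont_mult isCont_Gamma1 isCont_poch_shift isCont_poch_shift2) auto
  qed
  also have "pochhammer (of_int k + 1 :: real) (nat (-k)) = 0"
    unfolding pochhammer_eq_0_iff using assms by (intro exI[of _ "nat (-k-1)"]) auto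
  hence "?g 0 = 0" by simp
  finally show ?thesis .
qed

lemma caseF:
  assumes "n < k" "k < 0"
  shows "ibinom n k = 0"
proof -
  let ?g = "\<lambda>z::real. pochhammer (z + of_int (n - k) + 1) (nat (k - n)) / (Gamma (z + 1) * pochhammer (z + of_int n + 1) (nat (k - n)))"
  have "ibinom n k = ?g 0"
    unfolding ibinom_Fg
  proof (rule Lim_helper)
    fix z :: real assume z: "0 < \<bar>z\<bar>" "\<bar>z\<bar> < 1"
    have split: "pochhammer (z + of_int n + 1) (nat (- n)) =
        pochhammer (z + of_int n + 1) (nat (k - n)) * pochhammer (z + of_int k + 1) (nat (- k))"
    proof -
      have "nat (- n) = nat (k - n) + nat (- k)" using assms by simp
      hence "pochhammer (z + of_int n + 1) (nat (- n)) =
        pochhammer (z + of_int n + 1) (nat (k - n)) * pochhammer (z + of_int n + 1 + of_nat (nat (k - n))) (nat (- k))"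
        by (simp add: pochhammer_product')
      also have "z + of_int n + 1 + of_nat (nat (k - n)) = z + of_int k + 1" using assms by simp
      finally show ?thesis .
    qed
    have q: "Qf n z = 1 / pochhammer (z + of_int n + 1) (nat (- n))"
      "Qf k z = 1 / pochhammer (z + of_int k + 1) (nat (- k))"
      "Qf (n - k) z = 1 / pochhammer (z + of_int (n - k) + 1) (nat (k - n))"
      using assms by (auto simp: Qf_def)
    have G: "Gamma (z + 1) \<noteq> 0" using Gamma_nz not_Int_small[OF z, of 1] by simp
    show "Fg n k z = ?g z" unfolding Fg_Qf[OF z] q split
      using poch_nz_small[OF z, of n "nat (k - n)"] poch_nz_small[OF z, of k "nat (- k)"]
        poch_nz_small[OF z, of "n - k" "nat (k - n)"] G
      by (simp add: field_simps)
  next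
    have "pochhammer (of_int n + 1 :: real) (nat (k - n)) \<noteq> 0"
      unfolding pochhammer_eq_0_iff using assms by auto
    thus "isCont ?g 0"
      by (intro isCont_divide isCont_mult isCont_Gamma1 isCont_poch_shift isCont_poch_shift2) auto
  qed
  also have "pochhammer (of_int (n - k) + 1 :: real) (nat (k - n)) = 0"
    unfolding pochhammer_eq_0_iff using assms by (intro exI[of _ "nat (k - n - 1)"]) auto
  hence "?g 0 = 0" by simp
  finally show ?thesis .
qed

lemma ibinom_sym: "ibinom n k = ibinom n (n - k)"
  unfolding ibinom_Fg by (subst Fg_sym) simp

lemma ibinom_cb: "ibinom n k = cb n k"
proof -
  consider "0 \<le> k \<and> k \<le> n" | "n < 0 \<and> 0 \<le> k" | "n < 0 \<and> k \<le> n" | "0 \<le> n \<and> k < 0"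
    | "0 \<le> n \<and> n < k" | "n < k \<and> k < 0" by linarith
  thus ?thesis
  proof cases
    case 1 thus ?thesis by (simp add: caseA cb_def)
  next
    case 2 thus ?thesis by (simp add: caseB cb_def)
  next
    case 3
    hence "ibinom n k = ibinom n (n - k)" by (rule_tac ibinom_sym)
    also have "\<dots> = (-1) ^ nat (n - k) * real (nat (n - k - n - 1) choose nat (n - k))"
      using 3 by (intro caseB) auto
    finally show ?thesis using 3 by (simp add: cb_def)
  next
    case 4 thus ?thesis by (simp add: caseD cb_def)
  next
    case 5
    hence "ibinom n k = ibinom n (n - k)" by (rule_tac ibinom_sym)
    also have "\<dots> = 0" using 5 by (intro caseD) auto
    finally show ?thesis using 5 by (simp add: cb_def)
  next
    case 6 thus ?thesis by (simp add: caseF cb_def)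
  qed
qed

definition pint :: "nat \<Rightarrow> real \<Rightarrow> bool" where
  "pint p r \<longleftrightarrow> (\<exists>u v::int. \<not> int p dvd v \<and> r = of_int u / of_int v)"

definition pdiv :: "nat \<Rightarrow> nat \<Rightarrow> real \<Rightarrow> bool" where
  "pdiv p k r \<longleftrightarrow> (\<exists>s. pint p s \<and> r = real p ^ k * s)"

context
  fixes p :: nat
  assumes pp: "prime p"
begin

lemma pp_int: "prime (int p)" using pp by simp

lemma ndvd_mult: "\<not> int p dvd a \<Longrightarrow> \<not> int p dvd b \<Longrightarrow> \<not> int p dvd (a * b)"
  using pp_int by (simp add: prime_dvd_mult_iff)

lemma ndvd_nz: "\<not> int p dvd a \<Longrightarrow> a \<noteq> 0" by auto

lemma pint_of_int [simp]: "pint p (of_int z)"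
  unfolding pint_def using pp
  by (intro exI[of _ z] exI[of _ 1]) (auto simp: prime_gt_1_nat)

lemma pint_of_nat [simp]: "pint p (of_nat z)"
  using pint_of_int[of "int z"] by simp

lemma pint_0 [simp]: "pint p 0" using pint_of_int[of 0] by simp
lemma pint_1 [simp]: "pint p 1" using pint_of_int[of 1] by simp

lemma pint_add [intro]: "pint p a \<Longrightarrow> pint p b \<Longrightarrow> pint p (a + b)"
  unfolding pint_def
proof (elim exE conjE)
  fix u1 v1 u2 v2 :: int
  assume h: "\<not> int p dvd v1" "a = u1 / v1" "\<not> int p dvd v2" "b = u2 / v2"
  hence "v1 \<noteq> 0" "v2 \<noteq> 0" by auto
  hence "a + b = of_int (u1 * v2 + u2 * v1) / of_int (v1 * v2)" using h by (simp add: field_simps)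
  thus "\<exists>u v. \<not> int p dvd v \<and> a + b = of_int u / of_int v" using ndvd_mult[OF h(1,3)] by blast
qed

lemma pint_mult [intro]: "pint p a \<Longrightarrow> pint p b \<Longrightarrow> pint p (a * b)"
  unfolding pint_def
proof (elim exE conjE)
  fix u1 v1 u2 v2 :: int
  assume h: "\<not> int p dvd v1" "a = u1 / v1" "\<not> int p dvd v2" "b = u2 / v2"
  hence "a * b = of_int (u1 * u2) / of_int (v1 * v2)" by simp
  thus "\<exists>u v. \<not> int p dvd v \<and> a * b = of_int u / of_int v" using ndvd_mult[OF h(1,3)] by blast
qed

lemma pint_uminus [intro]: "pint p a \<Longrightarrow> pint p (- a)"
  using pint_mult[of "-1" a] pint_of_int[of "-1"] by simp

lemma pint_diff [intro]: "pint p a \<Longrightarrow> pint p b \<Longrightarrow> pint p (a - b)"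
  using pint_add[of a "- b"] pint_uminus[of b] by simp

lemma pint_div_int: "pint p a \<Longrightarrow> \<not> int p dvd d \<Longrightarrow> pint p (a / of_int d)"
  unfolding pint_def
proof (elim exE conjE)
  fix u1 v1 :: int
  assume h: "\<not> int p dvd v1" "a = u1 / v1" "\<not> int p dvd d"
  hence "a / d = of_int u1 / of_int (v1 * d)" by simp
  thus "\<exists>u v. \<not> int p dvd v \<and> a / d = of_int u / of_int v" using ndvd_mult[OF h(1,3)] by blast
qed

lemma pint_div_nat: "pint p a \<Longrightarrow> \<not> p dvd d \<Longrightarrow> pint p (a / of_nat d)"
  using pint_div_int[of a "int d"] by simp

lemma pint_sum: "(\<And>i. i \<in> I \<Longrightarrow> pint p (f i)) \<Longrightarrow> pint p (sum f I)"
  by (induction I rule: infinite_finite_induct) auto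

lemma pint_prod: "(\<And>i. i \<in> I \<Longrightarrow> pint p (f i)) \<Longrightarrow> pint p (prod f I)"
  by (induction I rule: infinite_finite_induct) auto

lemma pint_pow: "pint p a \<Longrightarrow> pint p (a ^ n)"
  by (induction n) auto

lemma pdiv_pint: "pint p a \<Longrightarrow> pdiv p 0 a"
  unfolding pdiv_def by auto

lemma pdiv_0 [simp]: "pdiv p k 0"
  unfolding pdiv_def by (intro exI[of _ 0]) auto

lemma pdiv_mono: "pdiv p k a \<Longrightarrow> j \<le> k \<Longrightarrow> pdiv p j a"
  unfolding pdiv_def
proof (elim exE conjE)
  fix s assume h: "pint p s" "a = real p ^ k * s" "j \<le> k"
  hence "a = real p ^ j * (real p ^ (k - j) * s)" by (simp add: power_add[symmetric] mult.assoc[symmetric])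
  moreover have "pint p (real p ^ (k - j) * s)" using h by (intro pint_mult) (auto intro: pint_pow)
  ultimately show "\<exists>s. pint p s \<and> a = real p ^ j * s" by blast
qed

lemma pdiv_add [intro]: "pdiv p k a \<Longrightarrow> pdiv p k b \<Longrightarrow> pdiv p k (a + b)"
  unfolding pdiv_def by (auto simp: distrib_left)

lemma pdiv_uminus [intro]: "pdiv p k a \<Longrightarrow> pdiv p k (- a)"
  unfolding pdiv_def by (metis mult_minus_right pint_uminus)

lemma pdiv_diff [intro]: "pdiv p k a \<Longrightarrow> pdiv p k b \<Longrightarrow> pdiv p k (a - b)"
  using pdiv_add[of k a "- b"] pdiv_uminus[of k b] by simp

lemma pdiv_mult: "pdiv p k a \<Longrightarrow> pdiv p l b \<Longrightarrow> pdiv p (k + l) (a * b)"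
  unfolding pdiv_def
proof (elim exE conjE)
  fix s t assume h: "pint p s" "a = real p ^ k * s" "pint p t" "b = real p ^ l * t"
  hence "a * b = real p ^ (k + l) * (s * t)" by (simp add: power_add)
  thus "\<exists>s. pint p s \<and> a * b = real p ^ (k + l) * s" using h by blast
qed

lemma pdiv_mult_pint: "pdiv p k a \<Longrightarrow> pint p b \<Longrightarrow> pdiv p k (a * b)"
  using pdiv_mult[of k a 0 b] pdiv_pint by simp

lemma pdiv_pint_mult: "pint p b \<Longrightarrow> pdiv p k a \<Longrightarrow> pdiv p k (b * a)"
  using pdiv_mult_pint[of k a b] by (simp add: mult.commute)

lemma pdiv_sum: "(\<And>i. i \<in> I \<Longrightarrow> pdiv p k (f i)) \<Longrightarrow> pdiv p k (sum f I)"
  by (induction I rule: infinite_finite_induct) auto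

lemma pdiv_int: "int p ^ k dvd z \<Longrightarrow> pdiv p k (of_int z)"
  unfolding pdiv_def by (elim dvdE) (auto intro!: exI[of _ "of_int _"])

lemma pdiv_mult_int: "pdiv p (multiplicity (int p) z) (of_int z)"
  by (rule pdiv_int) (rule multiplicity_dvd)

lemma pdiv_mult_nat: "pdiv p (multiplicity (int p) (int z)) (of_nat z)"
  using pdiv_mult_int[of "int z"] by simp

lemma pdiv_ppow: "pdiv p k (real p ^ k)"
  unfolding pdiv_def by (intro exI[of _ 1]) auto

lemma pdiv_div_nat: "pdiv p k a \<Longrightarrow> \<not> p dvd d \<Longrightarrow> pdiv p k (a / of_nat d)"
  using pdiv_mult_pint[of k a "1 / of_nat d"] pint_div_nat[of 1 d] by simp

lemma pdiv_half: "pdiv p (Suc k) a \<Longrightarrow> p = 2 \<Longrightarrow> pdiv p k (a / 2)"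
  unfolding pdiv_def by auto

end

definition Aset :: "nat \<Rightarrow> nat \<Rightarrow> nat \<Rightarrow> nat set" where
  "Aset p e y = {n. 0 < n \<and> n < y * p ^ e \<and> \<not> p dvd n}"

definition Pe :: "nat \<Rightarrow> nat \<Rightarrow> nat \<Rightarrow> real" where
  "Pe p e N = (\<Prod>n\<in>Aset p e N. real n)"

definition Uf :: "nat \<Rightarrow> nat \<Rightarrow> nat \<Rightarrow> nat \<Rightarrow> real" where
  "Uf p e x y = (\<Prod>n\<in>Aset p e y. 1 + real x * real p ^ e / real n)"

definition Bset :: "nat \<Rightarrow> nat \<Rightarrow> nat \<Rightarrow> nat set" where
  "Bset p e y = {n \<in> Aset p e y. 2 * n < y * p ^ e}"
definition Mset :: "nat \<Rightarrow> nat \<Rightarrow> nat \<Rightarrow> nat set" where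
  "Mset p e y = {n \<in> Aset p e y. 2 * n = y * p ^ e}"

lemma finite_Aset [simp]: "finite (Aset p e y)"
  by (rule finite_subset[of _ "{..<y * p ^ e}"]) (auto simp: Aset_def)

lemma Pe_nz: "Pe p e N \<noteq> 0"
  unfolding Pe_def by (auto simp: Aset_def)

context
  fixes p :: nat
  assumes pp: "prime p"
begin

lemma p_pos: "p > 0" using pp prime_gt_0_nat by blast

lemma Aset_add:
  assumes "e \<ge> 1"
  shows "Aset p e (x + y) = Aset p e x \<union> (\<lambda>m. x * p ^ e + m) ` Aset p e y"
proof -
  have pd: "p dvd x * p ^ e" using assms by (simp add: dvd_mult Suc_le_eq dvd_power)
  show ?thesis
  proof (intro equalityI subsetI)
    fix n assume n: "n \<in> Aset p e (x + y)"
    show "n \<in> Aset p e x \<union> (\<lambda>m. x * p ^ e + m) ` Aset p e y"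
    proof (cases "n < x * p ^ e")
      case True thus ?thesis using n by (auto simp: Aset_def)
    next
      case False
      hence "n = x * p ^ e + (n - x * p ^ e)" by simp
      moreover have "n - x * p ^ e \<in> Aset p e y"
      proof -
        have "\<not> p dvd (n - x * p ^ e)" using n pd False
          by (auto simp: Aset_def) (metis dvd_add le_add_diff_inverse not_le)
        moreover have "n - x * p ^ e < y * p ^ e" using n False by (auto simp: Aset_def algebra_simps)
        moreover have "n - x * p ^ e > 0" using calculation(1) by (metis dvd_0_right gr0I)
        ultimately show ?thesis by (auto simp: Aset_def)
      qed
      ultimately show ?thesis by blast
    qed
  next
    fix n assume n: "n \<in> Aset p e x \<union> (\<lambda>m. x * p ^ e + m) ` Aset p e y"
    show "n \<in> Aset p e (x + y)"
    proof (cases "n \<in> Aset p e x")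
      case True thus ?thesis by (auto simp: Aset_def algebra_simps)
    next
      case False
      then obtain m where m: "m \<in> Aset p e y" "n = x * p ^ e + m" using n by auto
      have "\<not> p dvd n" using m pd by (auto simp: Aset_def dvd_add_right_iff)
      thus ?thesis using m by (auto simp: Aset_def algebra_simps)
    qed
  qed
qed

lemma Pe_add:
  assumes "e \<ge> 1"
  shows "Pe p e (x + y) = Pe p e x * (\<Prod>m\<in>Aset p e y. real (x * p ^ e + m))"
proof -
  have disj: "Aset p e x \<inter> (\<lambda>m. x * p ^ e + m) ` Aset p e y = {}"
    by (auto simp: Aset_def)
  have inj: "inj_on (\<lambda>m. x * p ^ e + m) (Aset p e y)" by (auto simp: inj_on_def)
  show ?thesis
    unfolding Pe_def Aset_add[OF assms]
    by (subst prod.union_disjoint) (auto simp: disj prod.reindex[OF inj])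
qed

lemma Uf_Pe:
  assumes "e \<ge> 1"
  shows "Uf p e x y = Pe p e (x + y) / (Pe p e x * Pe p e y)"
proof -
  have "Uf p e x y = (\<Prod>n\<in>Aset p e y. real (x * p ^ e + n) / real n)"
    unfolding Uf_def by (intro prod.cong) (auto simp: Aset_def field_simps)
  also have "\<dots> = (\<Prod>n\<in>Aset p e y. real (x * p ^ e + n)) / Pe p e y"
    unfolding Pe_def by (rule prod_dividef)
  also have "\<dots> = Pe p e (x + y) / (Pe p e x * Pe p e y)"
    using Pe_nz[of p e x] by (simp add: Pe_add[OF assms])
  finally show ?thesis .
qed

lemma Uf_sym: "e \<ge> 1 \<Longrightarrow> Uf p e x y = Uf p e y x"
  by (simp add: Uf_Pe add.commute mult.commute)

lemma Uf_descent: "Uf p e (p * x) (p * y) = Uf p (Suc e) x y"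
  unfolding Uf_def Aset_def by (simp add: algebra_simps)

lemma fact_Pe: "fact (N * p) = Pe p 1 N * real p ^ N * fact N"
proof -
  have "{1..N * p} = Aset p 1 N \<union> (\<lambda>k. p * k) ` {1..N}"
  proof (intro equalityI subsetI)
    fix n assume n: "n \<in> {1..N * p}"
    show "n \<in> Aset p 1 N \<union> (\<lambda>k. p * k) ` {1..N}"
    proof (cases "p dvd n")
      case True
      then obtain k where k: "n = p * k" by auto
      hence "k \<in> {1..N}" using n p_pos by (auto simp: mult.commute)
      thus ?thesis using k by auto
    next
      case False
      hence "n < N * p" using n by (metis atLeastAtMost_iff dvd_triv_right le_neq_implies_less)
      thus ?thesis using n False by (auto simp: Aset_def)
    qed
  next
    fix n assume "n \<in> Aset p 1 N \<union> (\<lambda>k. p * k) ` {1..N}"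
    thus "n \<in> {1..N * p}" using p_pos by (auto simp: Aset_def mult.commute)
  qed
  moreover have "Aset p 1 N \<inter> (\<lambda>k. p * k) ` {1..N} = {}" by (auto simp: Aset_def)
  moreover have "inj_on (\<lambda>k. p * k) {1..N}" using p_pos by (auto simp: inj_on_def)
  ultimately have "fact (N * p) = Pe p 1 N * (\<Prod>k\<in>{1..N}. real (p * k))"
    unfolding fact_prod Pe_def by (simp add: prod.union_disjoint prod.reindex)
  also have "(\<Prod>k\<in>{1..N}. real (p * k)) = real p ^ N * fact N"
    by (simp add: prod.distrib fact_prod)
  finally show ?thesis by simp
qed

lemma T_Uf:
  "real ((x + y) * p choose (x * p)) / real (x + y choose x) = Uf p 1 x y"
proof -
  have f: "fact ((x + y) * p) = Pe p 1 (x + y) * real p ^ (x + y) * fact (x + y)"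
    "fact (x * p) = Pe p 1 x * real p ^ x * fact x"
    "fact (y * p) = Pe p 1 y * real p ^ y * fact y" by (rule fact_Pe)+
  have b1: "real ((x + y) * p choose (x * p)) = fact ((x + y) * p) / (fact (x * p) * fact (y * p))"
    by (subst binomial_fact) (auto simp: algebra_simps)
  have b2: "real (x + y choose x) = fact (x + y) / (fact x * fact y)"
    by (subst binomial_fact) auto
  have nz: "(fact x :: real) \<noteq> 0" "(fact y :: real) \<noteq> 0" "(fact (x + y) :: real) \<noteq> 0" by auto
  show ?thesis
    unfolding b1 b2 f Uf_Pe[OF order_refl]
    using Pe_nz[of p 1 x] Pe_nz[of p 1 y] p_pos nz
    by (simp add: power_add field_simps)
qed



lemma Aset_refl:
  assumes "e \<ge> 1" "n \<in> Aset p e y"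
  shows "y * p ^ e - n \<in> Aset p e y"
proof -
  have pd: "p dvd y * p ^ e" using assms by (simp add: dvd_mult Suc_le_eq dvd_power)
  have "\<not> p dvd (y * p ^ e - n)"
  proof
    assume "p dvd (y * p ^ e - n)"
    from dvd_diff_nat[OF pd this] have "p dvd y * p ^ e - (y * p ^ e - n)" .
    moreover have "y * p ^ e - (y * p ^ e - n) = n" using assms by (auto simp: Aset_def)
    ultimately show False using assms by (auto simp: Aset_def)
  qed
  thus ?thesis using assms by (auto simp: Aset_def)
qed


lemma Aset_split:
  assumes "e \<ge> 1"
  shows "Aset p e y = (Bset p e y \<union> Mset p e y) \<union> (\<lambda>n. y * p ^ e - n) ` Bset p e y"
    and "(Bset p e y \<union> Mset p e y) \<inter> (\<lambda>n. y * p ^ e - n) ` Bset p e y = {}"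
    and "Bset p e y \<inter> Mset p e y = {}"
    and "inj_on (\<lambda>n. y * p ^ e - n) (Bset p e y)"
proof -
  show "Aset p e y = (Bset p e y \<union> Mset p e y) \<union> (\<lambda>n. y * p ^ e - n) ` Bset p e y"
  proof (intro equalityI subsetI)
    fix n assume n: "n \<in> Aset p e y"
    show "n \<in> (Bset p e y \<union> Mset p e y) \<union> (\<lambda>n. y * p ^ e - n) ` Bset p e y"
    proof (cases "2 * n \<le> y * p ^ e")
      case True thus ?thesis using n by (auto simp: Bset_def Mset_def)
    next
      case False
      have "y * p ^ e - n \<in> Bset p e y" using Aset_refl[OF assms n] False n
        by (auto simp: Bset_def Aset_def)
      moreover have "n = y * p ^ e - (y * p ^ e - n)" using n by (auto simp: Aset_def)
      ultimately show ?thesis by blast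
    qed
  next
    fix n assume "n \<in> (Bset p e y \<union> Mset p e y) \<union> (\<lambda>n. y * p ^ e - n) ` Bset p e y"
    thus "n \<in> Aset p e y" using Aset_refl[OF assms] by (auto simp: Bset_def Mset_def)
  qed
  show "(Bset p e y \<union> Mset p e y) \<inter> (\<lambda>n. y * p ^ e - n) ` Bset p e y = {}"
    by (auto simp: Bset_def Mset_def Aset_def)
  show "Bset p e y \<inter> Mset p e y = {}" by (auto simp: Bset_def Mset_def)
  show "inj_on (\<lambda>n. y * p ^ e - n) (Bset p e y)" by (auto simp: inj_on_def Bset_def Aset_def)
qed

lemma finite_Bset [simp]: "finite (Bset p e y)" and finite_Mset [simp]: "finite (Mset p e y)"
  by (auto simp: Bset_def Mset_def)

lemma prod_pair:
  assumes "e \<ge> 1"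
  shows "(\<Prod>n\<in>Aset p e y. f n) = (\<Prod>n\<in>Bset p e y. f n * f (y * p ^ e - n)) * (\<Prod>n\<in>Mset p e y. f n)"
proof -
  note sp = Aset_split[OF assms]
  have "(\<Prod>n\<in>Aset p e y. f n) = (\<Prod>n\<in>Bset p e y \<union> Mset p e y. f n) * (\<Prod>n\<in>(\<lambda>n. y * p ^ e - n) ` Bset p e y. f n)"
    by (subst sp(1), rule prod.union_disjoint) (use sp(2) in auto)
  also have "(\<Prod>n\<in>Bset p e y \<union> Mset p e y. f n) = (\<Prod>n\<in>Bset p e y. f n) * (\<Prod>n\<in>Mset p e y. f n)"
    by (rule prod.union_disjoint) (use sp(3) in auto)
  also have "(\<Prod>n\<in>(\<lambda>n. y * p ^ e - n) ` Bset p e y. f n) = (\<Prod>n\<in>Bset p e y. f (y * p ^ e - n))"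
    by (subst prod.reindex[OF sp(4)]) simp
  finally show ?thesis by (simp add: prod.distrib mult_ac)
qed

lemma sum_pair:
  assumes "e \<ge> 1"
  shows "(\<Sum>n\<in>Aset p e y. f n) = (\<Sum>n\<in>Bset p e y. f n + f (y * p ^ e - n)) + (\<Sum>n\<in>Mset p e y. f n)"
proof -
  note sp = Aset_split[OF assms]
  have "(\<Sum>n\<in>Aset p e y. f n) = (\<Sum>n\<in>Bset p e y \<union> Mset p e y. f n) + (\<Sum>n\<in>(\<lambda>n. y * p ^ e - n) ` Bset p e y. f n)"
    by (subst sp(1), rule sum.union_disjoint) (use sp(2) in auto)
  also have "(\<Sum>n\<in>Bset p e y \<union> Mset p e y. f n) = (\<Sum>n\<in>Bset p e y. f n) + (\<Sum>n\<in>Mset p e y. f n)"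
    by (rule sum.union_disjoint) (use sp(3) in auto)
  also have "(\<Sum>n\<in>(\<lambda>n. y * p ^ e - n) ` Bset p e y. f n) = (\<Sum>n\<in>Bset p e y. f (y * p ^ e - n))"
    by (subst sum.reindex[OF sp(4)]) simp
  finally show ?thesis by (simp add: sum.distrib add_ac)
qed

lemma Mset_empty:
  assumes "e \<ge> 1" "p \<noteq> 2 \<or> e \<ge> 2"
  shows "Mset p e y = {}"
proof (rule ccontr)
  assume "Mset p e y \<noteq> {}"
  then obtain n where n: "n \<in> Aset p e y" "2 * n = y * p ^ e" by (auto simp: Mset_def)
  show False
  proof (cases "p = 2")
    case True
    with assms have "e \<ge> 2" by auto
    then obtain f where "e = Suc (Suc f)" by (metis add_2_eq_Suc le_Suc_ex)
    with True n have "n = 2 * (y * 2 ^ f)" by simp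
    with n True show False by (auto simp: Aset_def)
  next
    case False
    have "p dvd 2 * n" using n assms by (simp add: dvd_mult Suc_le_eq dvd_power)
    hence "p dvd 2 \<or> p dvd n" using pp prime_dvd_mult_iff by blast
    moreover have "\<not> p dvd 2" using False pp
      by (metis prime_nat_iff two_is_prime_nat primes_dvd_imp_eq)
    ultimately show False using n by (auto simp: Aset_def)
  qed
qed

lemma Mset_2_1: "p = 2 \<Longrightarrow> odd y \<Longrightarrow> Mset p 1 y = {y}"
  by (auto simp: Mset_def Aset_def odd_pos)

lemma pair_factor:
  assumes "n \<in> Aset p e y"
  shows "(1 + real x * real p ^ e / real n) * (1 + real x * real p ^ e / real (y * p ^ e - n))
    = 1 + real (x * (x + y)) * real p ^ (2 * e) * (1 / (real n * real (y * p ^ e - n)))"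
proof -
  have lt: "n < y * p ^ e" "n > 0" using assms by (auto simp: Aset_def)
  hence r: "real (y * p ^ e - n) = real y * real p ^ e - real n" by (simp add: of_nat_diff)
  have nz: "real y * real p ^ e - real n \<noteq> 0" using lt
    by (metis of_nat_eq_iff of_nat_mult of_nat_power less_irrefl eq_iff_diff_eq_0)
  have aux: "\<And>n N t::real. n \<noteq> 0 \<Longrightarrow> N - n \<noteq> 0 \<Longrightarrow>
     (1 + t / n) * (1 + t / (N - n)) = 1 + t * (t + N) * (1 / (n * (N - n)))"
    by (simp add: field_simps)
  have "(1 + real x * real p ^ e / real n) * (1 + real x * real p ^ e / (real y * real p ^ e - real n))
     = 1 + (real x * real p ^ e) * (real x * real p ^ e + real y * real p ^ e) * (1 / (real n * (real y * real p ^ e - real n)))"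
    using lt nz by (intro aux) auto
  also have "(real x * real p ^ e) * (real x * real p ^ e + real y * real p ^ e) = real (x * (x + y)) * real p ^ (2 * e)"
    by (simp add: algebra_simps power_mult power2_eq_square)
  finally show ?thesis unfolding r .
qed

lemma prod_expand:
  assumes "finite I" "pint p w" "\<And>i. i \<in> I \<Longrightarrow> pint p (c i)"
  shows "\<exists>Z. pint p Z \<and> (\<Prod>i\<in>I. 1 + w * c i) = 1 + w * (\<Sum>i\<in>I. c i) + w ^ 2 * Z"
  using assms(1,3)
proof (induction I rule: finite_induct)
  case empty thus ?case by (intro exI[of _ 0]) (auto simp: pint_0[OF pp])
next
  case (insert a F)
  then obtain Z where Z: "pint p Z" "(\<Prod>i\<in>F. 1 + w * c i) = 1 + w * (\<Sum>i\<in>F. c i) + w ^ 2 * Z" by auto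
  let ?S = "\<Sum>i\<in>F. c i"
  have "(\<Prod>i\<in>insert a F. 1 + w * c i) = (1 + w * c a) * (1 + w * ?S + w ^ 2 * Z)"
    using insert Z by simp
  also have "\<dots> = 1 + w * (c a + ?S) + w ^ 2 * (Z + ?S * c a + w * Z * c a)"
    by (simp add: algebra_simps power2_eq_square)
  finally show ?case using insert Z assms(2)
    by (intro exI[of _ "Z + ?S * c a + w * Z * c a"])
       (auto intro!: pint_add[OF pp] pint_mult[OF pp] pint_sum[OF pp])
qed


definition iv :: "nat \<Rightarrow> nat \<Rightarrow> nat" where
  "iv M n = (n ^ (totient M - 1)) mod M"

lemma iv_cong:
  assumes "\<not> p dvd n"
  shows "[n * iv (p ^ e) n = 1] (mod p ^ e)"
proof -
  have "coprime p n" using prime_imp_coprime[OF pp assms] .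
  hence cop: "coprime n (p ^ e)" by (simp add: coprime_commute)
  have tp: "totient (p ^ e) > 0" using p_pos by simp
  have "[n * iv (p ^ e) n = n * n ^ (totient (p ^ e) - 1)] (mod p ^ e)"
    unfolding iv_def by (intro cong_mult cong_refl) (simp add: cong_def)
  also have "n * n ^ (totient (p ^ e) - 1) = n ^ totient (p ^ e)"
    using tp by (simp add: power_Suc[symmetric] del: power_Suc)
  also have "[\<dots> = 1] (mod p ^ e)" using euler_theorem[OF cop] .
  finally show ?thesis .
qed

lemma iv_mod: "iv M (n mod M) = iv M n"
  unfolding iv_def by (simp add: power_mod)

lemma iv_ndvd:
  assumes "\<not> p dvd n" "e \<ge> 1"
  shows "\<not> p dvd iv (p ^ e) n"
proof
  assume d: "p dvd iv (p ^ e) n"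
  have "[n * iv (p ^ e) n = 1] (mod p)"
    by (rule cong_dvd_modulus_nat[OF iv_cong[OF assms(1), of e]]) (use assms(2) in \<open>simp add: dvd_power\<close>)
  moreover have "[n * iv (p ^ e) n = 0] (mod p)" using d by (simp add: cong_0_iff)
  ultimately have "[1 = 0] (mod p)" by (metis cong_sym cong_trans)
  thus False using pp by (simp add: cong_0_iff)
qed

lemma iv_U:
  assumes "u \<in> Aset p e 1" "e \<ge> 1"
  shows "iv (p ^ e) u \<in> Aset p e 1"
proof -
  have nd: "\<not> p dvd iv (p ^ e) u" using iv_ndvd assms by (auto simp: Aset_def)
  hence "iv (p ^ e) u > 0" by (intro gr0I) auto
  moreover have "iv (p ^ e) u < p ^ e" unfolding iv_def using p_pos by simp
  ultimately show ?thesis using nd by (auto simp: Aset_def)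
qed

lemma iv_inj:
  assumes "e \<ge> 1"
  shows "inj_on (iv (p ^ e)) (Aset p e 1)"
proof (rule inj_onI)
  fix u u' assume u: "u \<in> Aset p e 1" "u' \<in> Aset p e 1" and eq: "iv (p ^ e) u = iv (p ^ e) u'"
  let ?M = "p ^ e"
  have c1: "[u' * iv ?M u' = 1] (mod ?M)" "[u * iv ?M u = 1] (mod ?M)"
    using iv_cong u by (auto simp: Aset_def)
  have "[u * (u' * iv ?M u') = u * 1] (mod ?M)" by (intro cong_mult cong_refl c1)
  hence "[u * 1 = u * (u' * iv ?M u')] (mod ?M)" by (rule cong_sym)
  also have "u * (u' * iv ?M u') = u' * (u * iv ?M u)" using eq by simp
  also have "[u' * (u * iv ?M u) = u' * 1] (mod ?M)" by (intro cong_mult cong_refl c1)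
  finally have "[u = u'] (mod ?M)" by simp
  thus "u = u'" using u by (intro cong_less_modulus_unique_nat) (auto simp: Aset_def)
qed

lemma sum_iv_sq:
  assumes "e \<ge> 1"
  shows "(\<Sum>u\<in>Aset p e 1. (int (iv (p ^ e) u))^2) = (\<Sum>u\<in>Aset p e 1. (int u)^2)"
proof -
  have img: "iv (p ^ e) ` Aset p e 1 = Aset p e 1"
    using iv_U[OF _ assms] iv_inj[OF assms] by (intro endo_inj_surj) auto
  have "(\<Sum>u\<in>Aset p e 1. (int u)^2) = (\<Sum>u\<in>iv (p ^ e) ` Aset p e 1. (int u)^2)" by (simp only: img)
  also have "\<dots> = (\<Sum>u\<in>Aset p e 1. (int (iv (p ^ e) u))^2)"
    by (subst sum.reindex[OF iv_inj[OF assms]]) simp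
  finally show ?thesis by simp
qed

lemma sum_periodic:
  assumes "e \<ge> 1"
  shows "(\<Sum>n\<in>Aset p e y. g (n mod p ^ e)) = of_nat y * (\<Sum>u\<in>Aset p e 1. g u)"
proof (induction y)
  case 0 thus ?case by (simp add: Aset_def)
next
  case (Suc y)
  have disj: "Aset p e y \<inter> (\<lambda>m. y * p ^ e + m) ` Aset p e 1 = {}" by (auto simp: Aset_def)
  have inj: "inj_on (\<lambda>m. y * p ^ e + m) (Aset p e (Suc 0))" by (auto simp: inj_on_def)
  have "(\<Sum>n\<in>Aset p e (Suc y). g (n mod p ^ e)) =
      (\<Sum>n\<in>Aset p e y. g (n mod p ^ e)) + (\<Sum>m\<in>Aset p e 1. g ((y * p ^ e + m) mod p ^ e))"
    using Aset_add[OF assms, of y 1] disj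
    by (simp add: sum.union_disjoint sum.reindex[OF inj])
  also have "(\<Sum>m\<in>Aset p e 1. g ((y * p ^ e + m) mod p ^ e)) = (\<Sum>m\<in>Aset p e 1. g m)"
    by (intro sum.cong refl) (auto simp: Aset_def)
  finally show ?case using Suc by (simp add: algebra_simps)
qed


lemma prime3: "prime (3::nat)"
  unfolding prime_nat_iff
proof (intro conjI allI impI)
  fix m :: nat assume d: "m dvd 3"
  have "m \<le> 3" using d by (auto dest: dvd_imp_le)
  moreover have "m \<noteq> 0" using d by (metis dvd_0_left_iff zero_neq_numeral)
  ultimately have "m = 1 \<or> m = 2 \<or> m = 3" by auto
  thus "m = 1 \<or> m = 3" using d by auto
qed simp

lemma sum_sq6: "6 * (\<Sum>k<m. (int k)^2) = int m * (int m - 1) * (2 * int m - 1)"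
  by (induction m) (auto simp: algebra_simps power2_eq_square)

lemma sumsq_dvd:
  assumes "e \<ge> 1"
  shows "int p ^ (e - (if p = 2 \<or> p = 3 then 1 else 0)) dvd (\<Sum>u\<in>Aset p e (Suc 0). (int u)^2)"
proof -
  define m where "m = p ^ (e - 1)"
  have Mm: "p ^ e = p * m" using assms unfolding m_def by (metis Suc_diff_le diff_Suc_1 power_Suc)
  let ?X = "\<Sum>u\<in>Aset p e (Suc 0). (int u)^2"
  have split: "{..<p ^ e} = Aset p e (Suc 0) \<union> (\<lambda>k. p * k) ` {..<m}"
  proof (intro equalityI subsetI)
    fix n assume n: "n \<in> {..<p ^ e}"
    show "n \<in> Aset p e (Suc 0) \<union> (\<lambda>k. p * k) ` {..<m}"
    proof (cases "p dvd n")
      case True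
      then obtain k where "n = p * k" by auto
      moreover have "k < m" using n Mm calculation p_pos by auto
      ultimately show ?thesis by auto
    next
      case False thus ?thesis using n by (auto simp: Aset_def intro: gr0I)
    qed
  next
    fix n assume "n \<in> Aset p e (Suc 0) \<union> (\<lambda>k. p * k) ` {..<m}"
    thus "n \<in> {..<p ^ e}" using Mm p_pos by (auto simp: Aset_def)
  qed
  have disj: "Aset p e (Suc 0) \<inter> (\<lambda>k. p * k) ` {..<m} = {}" by (auto simp: Aset_def)
  have inj: "inj_on (\<lambda>k. p * k) {..<m}" using p_pos by (auto simp: inj_on_def)
  have "(\<Sum>u<p ^ e. (int u)^2) = ?X + (\<Sum>k<m. (int (p * k))^2)"
    unfolding split by (simp add: sum.union_disjoint disj sum.reindex[OF inj])
  also have "(\<Sum>k<m. (int (p * k))^2) = int p ^ 2 * (\<Sum>k<m. (int k)^2)"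
    by (simp add: sum_distrib_left power_mult_distrib)
  finally have "6 * ?X = 6 * (\<Sum>u<p ^ e. (int u)^2) - int p ^ 2 * (6 * (\<Sum>k<m. (int k)^2))"
    by (simp add: algebra_simps)
  also have "\<dots> = int (p ^ e) * (int (p ^ e) - 1) * (2 * int (p ^ e) - 1)
      - int p ^ 2 * (int m * (int m - 1) * (2 * int m - 1))"
    unfolding sum_sq6 ..
  also have "\<dots> = (int p * int m) * ((int p * int m - 1) * (2 * (int p * int m) - 1)
      - int p * ((int m - 1) * (2 * int m - 1)))"
    unfolding Mm by (simp add: algebra_simps power2_eq_square)
  finally have eq6: "6 * ?X = (int p * int m) * ((int p * int m - 1) * (2 * (int p * int m) - 1)
      - int p * ((int m - 1) * (2 * int m - 1)))" .
  have "int p ^ e = int p * int m" using Mm by (metis of_nat_mult of_nat_power)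
  hence dv: "int p ^ e dvd 6 * ?X" unfolding eq6 by simp
  show ?thesis
  proof (cases "p = 2 \<or> p = 3")
    case False
    have "coprime (int p) 6"
    proof -
      have "\<not> int p dvd 6"
      proof
        assume "int p dvd 6"
        hence "p dvd 6" by presburger
        hence "p dvd 2 * 3" by simp
        hence "p dvd 2 \<or> p dvd 3" using pp prime_dvd_mult_iff by blast
        moreover have "prime (3::nat)" by (rule prime3)
        ultimately show False using False pp primes_dvd_imp_eq two_is_prime_nat by blast
      qed
      thus ?thesis using pp_int[OF pp] by (simp add: prime_imp_coprime)
    qed
    hence "coprime (int p ^ e) 6" by simp
    hence "int p ^ e dvd ?X" using dv coprime_dvd_mult_right_iff by blast
    thus ?thesis using False by simp
  next
    case True
    obtain f where f: "e = Suc f" using assms by (metis Suc_le_D le_numeral_extra(2) Suc_le_eq not0_implies_Suc)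
    show ?thesis
    proof (cases "p = 2")
      case True
      with dv f obtain k where k: "6 * ?X = 2 * 2 ^ f * k" by (auto elim: dvdE)
      hence "3 * ?X = 2 ^ f * k" by simp
      hence "2 ^ f dvd 3 * ?X" by simp
      moreover have "coprime ((2::int) ^ f) 3"
        using coprime_add_one_right[of "2::int"] by simp
      ultimately have "2 ^ f dvd ?X" using coprime_dvd_mult_right_iff by blast
      thus ?thesis using True f by simp
    next
      case False
      with \<open>p = 2 \<or> p = 3\<close> have p3: "p = 3" by simp
      with dv f obtain k where k: "6 * ?X = 3 * 3 ^ f * k" by (auto elim: dvdE)
      hence "2 * ?X = 3 ^ f * k" by simp
      hence "3 ^ f dvd 2 * ?X" by simp
      moreover have "coprime ((3::int) ^ f) 2"
        using coprime_add_one_left[of "2::int"] by simp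
      ultimately have "3 ^ f dvd ?X" using coprime_dvd_mult_right_iff by blast
      thus ?thesis using p3 f by simp
    qed
  qed
qed


lemma ndvd_nat_mult: "\<not> p dvd a \<Longrightarrow> \<not> p dvd b \<Longrightarrow> \<not> p dvd (a * b)"
  using pp prime_dvd_mult_iff by blast

lemma S_bound:
  assumes "e \<ge> 1"
  shows "pdiv p (e - (if p = 2 \<or> p = 3 then 1 else 0))
           (\<Sum>n\<in>Aset p e y. 1 / (real n * real (y * p ^ e - n)))"
proof -
  let ?c = "if p = 2 \<or> p = 3 then 1 else 0 :: nat"
  let ?N = "y * p ^ e"
  let ?A = "Aset p e y"
  let ?i = "iv (p ^ e)"
  have T1: "pdiv p e (\<Sum>n\<in>?A. 1 / (real n * real (?N - n)) + 1 / real n ^ 2)"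
  proof (rule pdiv_sum[OF pp])
    fix n assume n: "n \<in> ?A"
    have lt: "n < ?N" "0 < n" "\<not> p dvd n" using n by (auto simp: Aset_def)
    have nd: "\<not> p dvd (?N - n)" using Aset_refl[OF assms n] by (auto simp: Aset_def)
    have r: "real (?N - n) = real y * real p ^ e - real n" using lt by (simp add: of_nat_diff)
    have nz: "real y * real p ^ e - real n \<noteq> 0" using lt
      by (metis of_nat_eq_iff of_nat_mult of_nat_power less_irrefl eq_iff_diff_eq_0)
    have "1 / (real n * real (?N - n)) + 1 / real n ^ 2 = real p ^ e * (real y / real (n * n * (?N - n)))"
      unfolding r using lt nz by (simp add: field_simps power2_eq_square of_nat_diff)
    moreover have "pdiv p e (real p ^ e * (real y / real (n * n * (?N - n))))"
      by (rule pdiv_mult_pint[OF pp pdiv_ppow[OF pp]], rule pint_div_nat[OF pp])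
         (use lt nd ndvd_nat_mult pint_of_nat[OF pp] in auto)
    ultimately show "pdiv p e (1 / (real n * real (?N - n)) + 1 / real n ^ 2)" by simp
  qed
  have T2: "pdiv p e (\<Sum>n\<in>?A. 1 / real n ^ 2 - real (?i n) ^ 2)"
  proof (rule pdiv_sum[OF pp])
    fix n assume n: "n \<in> ?A"
    have lt: "0 < n" "\<not> p dvd n" using n by (auto simp: Aset_def)
    have c: "[n * ?i n = 1] (mod p ^ e)" using iv_cong[OF lt(2)] .
    hence "[int (n * ?i n) = int 1] (mod int (p ^ e))" by (simp only: cong_int_iff)
    hence "int (p ^ e) dvd int (n * ?i n) - 1" by (simp add: cong_iff_dvd_diff)
    hence "int p ^ e dvd (int (n * ?i n) - 1) * (- (int (n * ?i n) + 1))" by simp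
    hence d: "int p ^ e dvd 1 - (int n * int (?i n))^2" by (simp add: algebra_simps power2_eq_square)
    have "1 / real n ^ 2 - real (?i n) ^ 2 = of_int (1 - (int n * int (?i n))^2) / real (n * n)"
      using lt by (simp add: field_simps power2_eq_square)
    moreover have "pdiv p e (of_int (1 - (int n * int (?i n))^2) / real (n * n))"
      by (rule pdiv_div_nat[OF pp pdiv_int[OF pp d]]) (use lt ndvd_nat_mult in auto)
    ultimately show "pdiv p e (1 / real n ^ 2 - real (?i n) ^ 2)" by simp
  qed
  have T3: "(\<Sum>n\<in>?A. (int (?i n))^2) = int y * (\<Sum>u\<in>Aset p e 1. (int u)^2)"
  proof -
    have "(\<Sum>n\<in>?A. (int (?i n))^2) = (\<Sum>n\<in>?A. (\<lambda>u. (int (?i u))^2) (n mod p ^ e))"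
      by (simp add: iv_mod)
    also have "\<dots> = int y * (\<Sum>u\<in>Aset p e 1. (int (?i u))^2)"
      by (rule sum_periodic[OF assms])
    also have "(\<Sum>u\<in>Aset p e 1. (int (?i u))^2) = (\<Sum>u\<in>Aset p e 1. (int u)^2)"
      by (rule sum_iv_sq[OF assms])
    finally show ?thesis .
  qed
  have T4: "pdiv p (e - ?c) (\<Sum>n\<in>?A. real (?i n) ^ 2)"
  proof -
    have "(\<Sum>n\<in>?A. real (?i n) ^ 2) = of_int (\<Sum>n\<in>?A. (int (?i n))^2)" by simp
    also have "\<dots> = of_int (int y * (\<Sum>u\<in>Aset p e 1. (int u)^2))" by (simp only: T3)
    finally have eq: "(\<Sum>n\<in>?A. real (?i n) ^ 2) = of_int (int y * (\<Sum>u\<in>Aset p e 1. (int u)^2))" .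
    have "int p ^ (e - ?c) dvd int y * (\<Sum>u\<in>Aset p e 1. (int u)^2)"
      using sumsq_dvd[OF assms] by simp
    thus ?thesis unfolding eq by (rule pdiv_int[OF pp])
  qed
  have "(\<Sum>n\<in>?A. 1 / (real n * real (?N - n))) =
     (\<Sum>n\<in>?A. 1 / (real n * real (?N - n)) + 1 / real n ^ 2)
     - (\<Sum>n\<in>?A. 1 / real n ^ 2 - real (?i n) ^ 2) - (\<Sum>n\<in>?A. real (?i n) ^ 2)"
    by (simp add: sum.distrib sum_subtractf)
  moreover have "pdiv p (e - ?c) \<dots>"
    using pdiv_mono[OF pp T1, of "e - ?c"] pdiv_mono[OF pp T2, of "e - ?c"] T4
    by (intro pdiv_diff[OF pp]) auto
  ultimately show ?thesis by simp
qed


lemma c_sym: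
  assumes "n \<in> Aset p e y"
  shows "1 / (real (y * p ^ e - n) * real (y * p ^ e - (y * p ^ e - n))) = 1 / (real n * real (y * p ^ e - n))"
proof -
  have "y * p ^ e - (y * p ^ e - n) = n" using assms by (auto simp: Aset_def)
  thus ?thesis by (simp add: mult.commute)
qed

lemma c_pint:
  assumes "e \<ge> 1" "n \<in> Aset p e y"
  shows "pint p (1 / (real n * real (y * p ^ e - n)))"
proof -
  have "\<not> p dvd n" "\<not> p dvd (y * p ^ e - n)" using assms Aset_refl[OF assms] by (auto simp: Aset_def)
  hence "\<not> p dvd n * (y * p ^ e - n)" by (rule ndvd_nat_mult)
  from pint_div_nat[OF pp pint_1[OF pp] this] show ?thesis by simp
qed

lemma Uf_expand:
  assumes "e \<ge> 1"
  shows "\<exists>Z. pint p Z \<and> (\<Prod>n\<in>Bset p e y. (1 + real x * real p ^ e / real n) * (1 + real x * real p ^ e / real (y * p ^ e - n)))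
    = 1 + (real (x * (x + y)) * real p ^ (2 * e)) * (\<Sum>n\<in>Bset p e y. 1 / (real n * real (y * p ^ e - n)))
      + (real (x * (x + y)) * real p ^ (2 * e)) ^ 2 * Z"
proof -
  have "(\<Prod>n\<in>Bset p e y. (1 + real x * real p ^ e / real n) * (1 + real x * real p ^ e / real (y * p ^ e - n)))
     = (\<Prod>n\<in>Bset p e y. 1 + (real (x * (x + y)) * real p ^ (2 * e)) * (1 / (real n * real (y * p ^ e - n))))"
    by (intro prod.cong refl, rule pair_factor) (auto simp: Bset_def)
  moreover have "\<exists>Z. pint p Z \<and> (\<Prod>n\<in>Bset p e y. 1 + (real (x * (x + y)) * real p ^ (2 * e)) * (1 / (real n * real (y * p ^ e - n))))
    = 1 + (real (x * (x + y)) * real p ^ (2 * e)) * (\<Sum>n\<in>Bset p e y. 1 / (real n * real (y * p ^ e - n)))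
      + (real (x * (x + y)) * real p ^ (2 * e)) ^ 2 * Z"
  proof (rule prod_expand)
    show "finite (Bset p e y)" by simp
    show "pint p (real (x * (x + y)) * real p ^ (2 * e))"
      by (intro pint_mult[OF pp] pint_pow[OF pp] pint_of_nat[OF pp])
    fix n assume "n \<in> Bset p e y"
    thus "pint p (1 / (real n * real (y * p ^ e - n)))" by (intro c_pint[OF assms]) (simp add: Bset_def)
  qed
  ultimately show ?thesis by simp
qed

definition c12 :: "nat \<Rightarrow> nat" where "c12 q = (if q = 2 then 2 else if q = 3 then 1 else 0)"

lemma w_pdiv: "pdiv p (multiplicity (int p) (int x) + multiplicity (int p) (int (x + y)) + 2 * e)
   (real (x * (x + y)) * real p ^ (2 * e))"
  using pdiv_mult[OF pp pdiv_mult[OF pp pdiv_mult_nat[OF pp, of x] pdiv_mult_nat[OF pp, of "x + y"]] pdiv_ppow[OF pp, of "2 * e"]]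
  by (simp add: mult.assoc)

lemma core_level:
  assumes e: "e \<ge> 1" and x: "x > 0" and y: "y > 0" and ny: "\<not> p dvd y"
  shows "pdiv p (3 * e - c12 p + multiplicity (int p) (int x) + multiplicity (int p) (int (x + y)))
     (Uf p e x y - (if p = 2 \<and> e = 1 \<and> odd x \<and> odd y then -1 else 1))"
proof -
  let ?vx = "multiplicity (int p) (int x)" and ?vxy = "multiplicity (int p) (int (x + y))"
  let ?w = "real (x * (x + y)) * real p ^ (2 * e)"
  let ?C = "\<Sum>n\<in>Bset p e y. 1 / (real n * real (y * p ^ e - n))"
  let ?f = "\<lambda>n. 1 + real x * real p ^ e / real n"
  obtain Z where Z: "pint p Z" "(\<Prod>n\<in>Bset p e y. ?f n * ?f (y * p ^ e - n)) = 1 + ?w * ?C + ?w ^ 2 * Z"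
    using Uf_expand[OF e, where x=x and y=y] by (elim exE conjE) simp
  have Uf_eq: "Uf p e x y = (\<Prod>n\<in>Bset p e y. ?f n * ?f (y * p ^ e - n)) * (\<Prod>n\<in>Mset p e y. ?f n)"
    unfolding Uf_def by (rule prod_pair[OF e])
  have wd: "pdiv p (?vx + ?vxy + 2 * e) ?w" by (rule w_pdiv)
  have Cp: "pint p ?C"
  proof (rule pint_sum[OF pp])
    fix n assume "n \<in> Bset p e y"
    thus "pint p (1 / (real n * real (y * p ^ e - n)))" by (intro c_pint[OF e]) (simp add: Bset_def)
  qed
  show ?thesis
  proof (cases "p \<noteq> 2 \<or> e \<ge> 2")
    case True
    have M: "Mset p e y = {}" using Mset_empty[OF e True] .
    have eps: "(if p = 2 \<and> e = 1 \<and> odd x \<and> odd y then -1 else 1 :: real) = 1" using True by auto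
    have S2: "(\<Sum>n\<in>Aset p e y. 1 / (real n * real (y * p ^ e - n))) = 2 * ?C"
    proof -
      have "(\<Sum>n\<in>Aset p e y. 1 / (real n * real (y * p ^ e - n))) =
          (\<Sum>n\<in>Bset p e y. 1 / (real n * real (y * p ^ e - n)) + 1 / (real (y * p ^ e - n) * real (y * p ^ e - (y * p ^ e - n))))
          + (\<Sum>n\<in>Mset p e y. 1 / (real n * real (y * p ^ e - n)))"
        by (rule sum_pair[OF e])
      also have "(\<Sum>n\<in>Bset p e y. 1 / (real n * real (y * p ^ e - n)) + 1 / (real (y * p ^ e - n) * real (y * p ^ e - (y * p ^ e - n))))
          = (\<Sum>n\<in>Bset p e y. 2 * (1 / (real n * real (y * p ^ e - n))))"
      proof (intro sum.cong refl)
        fix n assume "n \<in> Bset p e y"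
        hence "n \<in> Aset p e y" by (simp add: Bset_def)
        note h = c_sym[OF this]
        show "1 / (real n * real (y * p ^ e - n)) + 1 / (real (y * p ^ e - n) * real (y * p ^ e - (y * p ^ e - n)))
          = 2 * (1 / (real n * real (y * p ^ e - n)))" unfolding h by simp
      qed
      finally show ?thesis by (simp add: M sum_distrib_left)
    qed
    have Cd: "pdiv p (3 * e - c12 p - 2 * e) ?C"
    proof (cases "p = 2")
      case True
      with \<open>p \<noteq> 2 \<or> e \<ge> 2\<close> have e2: "e \<ge> 2" by auto
      have "pdiv p (e - 1) (2 * ?C)" using S_bound[OF e, of y] unfolding S2 using True by simp
      moreover have "e - 1 = Suc (e - 2)" using e2 by simp
      ultimately have "pdiv p (Suc (e - 2)) (2 * ?C)" by simp
      from pdiv_half[OF pp this True] have "pdiv p (e - 2) ?C" by simp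
      moreover have "3 * e - c12 p - 2 * e = e - 2" using True e2 by (simp add: c12_def)
      ultimately show ?thesis by simp
    next
      case False
      have "pdiv p (e - (if p = 2 \<or> p = 3 then 1 else 0)) (2 * ?C)" using S_bound[OF e, of y] unfolding S2 .
      hence "pdiv p (e - (if p = 2 \<or> p = 3 then 1 else 0)) ((2 * ?C) * (1 / real 2))"
      proof (rule pdiv_mult_pint[OF pp])
        have "\<not> p dvd 2" using primes_dvd_imp_eq[OF pp two_is_prime_nat] False by blast
        from pint_div_nat[OF pp pint_1[OF pp] this] show "pint p (1 / real 2)" by simp
      qed
      moreover have "3 * e - c12 p - 2 * e = e - (if p = 2 \<or> p = 3 then 1 else 0)"
        using False e by (simp add: c12_def)
      ultimately show ?thesis by simp
    qed
    have U1: "Uf p e x y - 1 = ?w * ?C + ?w ^ 2 * Z" using Uf_eq Z by (simp add: M)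
    have ar1: "3 * e - c12 p + ?vx + ?vxy \<le> (?vx + ?vxy + 2 * e) + (3 * e - c12 p - 2 * e)"
      using e unfolding c12_def by auto
    have ar2: "3 * e - c12 p + ?vx + ?vxy \<le> (?vx + ?vxy + 2 * e) + (?vx + ?vxy + 2 * e)"
      using e unfolding c12_def by auto
    have A1: "pdiv p (3 * e - c12 p + ?vx + ?vxy) (?w * ?C)"
      by (rule pdiv_mono[OF pp pdiv_mult[OF pp wd Cd] ar1])
    have "pdiv p ((?vx + ?vxy + 2 * e) + (?vx + ?vxy + 2 * e)) (?w * ?w * Z)"
      by (rule pdiv_mult_pint[OF pp pdiv_mult[OF pp wd wd] Z(1)])
    hence A2: "pdiv p (3 * e - c12 p + ?vx + ?vxy) (?w ^ 2 * Z)"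
      unfolding power2_eq_square by (rule pdiv_mono[OF pp _ ar2])
    have "pdiv p (3 * e - c12 p + ?vx + ?vxy) (Uf p e x y - 1)"
      unfolding U1 by (rule pdiv_add[OF pp A1 A2])
    thus ?thesis using eps by simp
  next
    case False
    hence p2: "p = 2" and e1: "e = 1" using e by auto
    have oy: "odd y" using ny p2 by simp
    have M: "Mset p e y = {y}" using Mset_2_1[OF p2 oy] e1 by simp
    let ?P = "\<Prod>n\<in>Bset p e y. ?f n * ?f (y * p ^ e - n)"
    let ?m = "1 + real x * real p ^ e / real y"
    have Uf2: "Uf p e x y = ?P * ?m" using Uf_eq by (simp add: M)
    have wp: "pint p ?w" by (intro pint_mult[OF pp] pint_pow[OF pp] pint_of_nat[OF pp])
    have Pd: "pdiv p (?vx + ?vxy + 2 * e) (?P - 1)"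
    proof -
      have "?P - 1 = ?w * (?C + ?w * Z)" using Z(2) by (simp add: algebra_simps power2_eq_square)
      moreover have "pint p (?C + ?w * Z)" by (rule pint_add[OF pp Cp pint_mult[OF pp wp Z(1)]])
      ultimately show ?thesis using pdiv_mult_pint[OF pp wd] by simp
    qed
    have mp: "pint p ?m"
      by (rule pint_add[OF pp pint_1[OF pp] pint_div_nat[OF pp _ ny]])
         (intro pint_mult[OF pp] pint_pow[OF pp] pint_of_nat[OF pp])
    have mpd: "pdiv p (?vx + ?vxy + 2 * e) (?m * (?P - 1))" using pdiv_pint_mult[OF pp mp Pd] .
    have two: "real p ^ e = real p ^ 1" using e1 by simp
    show ?thesis
    proof (cases "odd x")
      case True
      have "\<not> int p dvd int x" using True p2 by simp
      hence vx0: "?vx = 0" by (rule not_dvd_imp_multiplicity_0)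
      have "Uf p e x y + 1 = ?m * (?P - 1) + real p ^ 1 * (real (x + y) / real y)"
        unfolding Uf2 two using y by (simp add: field_simps p2)
      moreover have "pdiv p (1 + ?vxy) (real p ^ 1 * (real (x + y) / real y))"
        by (rule pdiv_mult[OF pp pdiv_ppow[OF pp] pdiv_div_nat[OF pp pdiv_mult_nat[OF pp] ny]])
      moreover have "pdiv p (1 + ?vxy) (?m * (?P - 1))" by (rule pdiv_mono[OF pp mpd]) (simp add: e1)
      ultimately have fin: "pdiv p (1 + ?vxy) (Uf p e x y + 1)" by (simp add: pdiv_add[OF pp])
      have eq: "3 * e - c12 p + ?vx + ?vxy = 1 + ?vxy" using vx0 p2 e1 by (simp add: c12_def)
      have eps: "(if p = 2 \<and> e = 1 \<and> odd x \<and> odd y then -1 else 1 :: real) = -1" using True oy p2 e1 by simp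
      show ?thesis unfolding eq eps using fin by simp
    next
      case False
      have "\<not> int p dvd int (x + y)" using False oy p2 by simp
      hence vxy0: "?vxy = 0" by (rule not_dvd_imp_multiplicity_0)
      have "Uf p e x y - 1 = ?m * (?P - 1) + real p ^ 1 * (real x / real y)"
        unfolding Uf2 two using y by (simp add: field_simps p2)
      moreover have "pdiv p (1 + ?vx) (real p ^ 1 * (real x / real y))"
        by (rule pdiv_mult[OF pp pdiv_ppow[OF pp] pdiv_div_nat[OF pp pdiv_mult_nat[OF pp] ny]])
      moreover have "pdiv p (1 + ?vx) (?m * (?P - 1))" by (rule pdiv_mono[OF pp mpd]) (simp add: e1)
      ultimately have fin: "pdiv p (1 + ?vx) (Uf p e x y - 1)" by (simp add: pdiv_add[OF pp])
      have eq: "3 * e - c12 p + ?vx + ?vxy = 1 + ?vx" using vxy0 p2 e1 by (simp add: c12_def)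
      have eps: "(if p = 2 \<and> e = 1 \<and> odd x \<and> odd y then -1 else 1 :: real) = 1" using False by simp
      show ?thesis unfolding eq eps using fin .
    qed
  qed
qed


lemma mult_p_times: "x > 0 \<Longrightarrow> multiplicity (int p) (int (p * x)) = Suc (multiplicity (int p) (int x))"
proof -
  assume x: "x > 0"
  have "multiplicity (int p) (int p * int x) = Suc (multiplicity (int p) (int x))"
    by (rule multiplicity_times_same) (use p_pos x pp_int[OF pp] not_prime_unit in auto)
  thus ?thesis by simp
qed

lemma core_all:
  "\<And>e y. e \<ge> 1 \<Longrightarrow> x > 0 \<Longrightarrow> y > 0 \<Longrightarrow>
     pdiv p (3 * e - c12 p + multiplicity (int p) (int x) + multiplicity (int p) (int y)
        + multiplicity (int p) (int (x + y)))
     (Uf p e x y - (if p = 2 \<and> e = 1 \<and> odd x \<and> odd y then -1 else 1))"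
proof (induction x rule: less_induct)
  case (less x e y)
  let ?v = "\<lambda>z. multiplicity (int p) (int z)"
  show ?case
  proof (cases "p dvd y")
    case False
    have "?v y = 0" using False by (intro not_dvd_imp_multiplicity_0) simp
    thus ?thesis using core_level[OF less.prems False] by simp
  next
    case py: True
    show ?thesis
    proof (cases "p dvd x")
      case False
      have v0: "?v x = 0" using False by (intro not_dvd_imp_multiplicity_0) simp
      have "pdiv p (3 * e - c12 p + ?v y + ?v (y + x))
        (Uf p e y x - (if p = 2 \<and> e = 1 \<and> odd y \<and> odd x then -1 else 1))"
        using core_level[OF less.prems(1,3,2) False] .
      thus ?thesis using v0 Uf_sym[OF less.prems(1), of x y] by (simp add: add.commute conj_commute)
    next
      case px: True
      obtain x' where x': "x = p * x'" using px by auto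
      obtain y' where y': "y = p * y'" using py by auto
      have pos: "x' > 0" "y' > 0" using x' y' less.prems by auto
      have lt: "x' < x" using x' pos pp prime_gt_1_nat by (simp add: x')
      have IH: "pdiv p (3 * Suc e - c12 p + ?v x' + ?v y' + ?v (x' + y'))
         (Uf p (Suc e) x' y' - (if p = 2 \<and> Suc e = 1 \<and> odd x' \<and> odd y' then -1 else 1))"
        using less.IH[OF lt, of "Suc e" y'] pos by simp
      have U: "Uf p e x y = Uf p (Suc e) x' y'" unfolding x' y' by (rule Uf_descent)
      have xy: "x + y = p * (x' + y')" using x' y' by (simp add: algebra_simps)
      have eps: "(if p = 2 \<and> e = 1 \<and> odd x \<and> odd y then -1 else 1 :: real) = 1"
        using x' px pp by (auto simp: x' dest: dvd_imp_le)
      have ar: "3 * Suc e - c12 p + ?v x' + ?v y' + ?v (x' + y') =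
         3 * e - c12 p + ?v x + ?v y + ?v (x + y)"
      proof -
        have v1: "?v x = Suc (?v x')" unfolding x' by (rule mult_p_times[OF pos(1)])
        have v2: "?v y = Suc (?v y')" unfolding y' by (rule mult_p_times[OF pos(2)])
        have v3: "?v (x + y) = Suc (?v (x' + y'))" unfolding xy by (rule mult_p_times) (use pos in simp)
        show ?thesis unfolding v1 v2 v3 using less.prems(1) by (simp add: c12_def) linarith
      qed
      show ?thesis using IH less.prems(1) unfolding U eps ar[symmetric] by simp
    qed
  qed
qed

lemma core_T:
  assumes "x > 0" "y > 0"
  shows "pdiv p (3 - c12 p + multiplicity (int p) (int x) + multiplicity (int p) (int y)
        + multiplicity (int p) (int (x + y)))
     (real ((x + y) * p choose (x * p)) / real (x + y choose x) - (if p = 2 \<and> odd x \<and> odd y then -1 else 1))"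
  using core_all[of 1 x y] assms by (simp add: T_Uf)


lemma mult12: "multiplicity (int p) 12 = c12 p"
proof -
  have pu: "\<not> is_unit (int p)" "int p \<noteq> 0" using pp_int[OF pp] not_prime_unit p_pos by auto
  have pe: "prime_elem (int p)" using pp_int[OF pp] by (simp add: prime_imp_prime_elem)
  have 12: "(12::int) = 2 ^ 2 * 3" by simp
  have m: "multiplicity (int p) 12 = multiplicity (int p) (2 ^ 2) + multiplicity (int p) 3"
    unfolding 12 by (rule prime_elem_multiplicity_mult_distrib[OF pe]) auto
  have m4: "multiplicity (int p) (2 ^ 2) = 2 * multiplicity (int p) 2"
    using prime_elem_multiplicity_power_distrib[OF pe, of 2 2] by simp
  show ?thesis
  proof (cases "p = 2")
    case True
    have "multiplicity (int p) 3 = 0" using True by (intro not_dvd_imp_multiplicity_0) simp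
    moreover have "multiplicity (int p) 2 = 1" using True multiplicity_self[OF pu(2,1)] by simp
    ultimately show ?thesis using m m4 True by (simp add: c12_def)
  next
    case n2: False
    have "\<not> int p dvd 2"
    proof
      assume "int p dvd 2" hence "p dvd 2" by presburger
      thus False using primes_dvd_imp_eq[OF pp two_is_prime_nat] n2 by blast
    qed
    hence m2: "multiplicity (int p) 2 = 0" by (rule not_dvd_imp_multiplicity_0)
    show ?thesis
    proof (cases "p = 3")
      case True
      have "multiplicity (int p) 3 = 1" using True multiplicity_self[OF pu(2,1)] by simp
      thus ?thesis using m m4 m2 True by (simp add: c12_def)
    next
      case False
      have "\<not> int p dvd 3"
      proof
        assume "int p dvd 3" hence "p dvd 3" by presburger
        thus False using primes_dvd_imp_eq[OF pp prime3] False by blast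
      qed
      hence "multiplicity (int p) 3 = 0" by (rule not_dvd_imp_multiplicity_0)
      thus ?thesis using m m4 m2 False n2 by (simp add: c12_def)
    qed
  qed
qed

lemma mult3:
  assumes "x > 0" "y > 0"
  shows "multiplicity (int p) (int x * int y * int (x + y)) =
    multiplicity (int p) (int x) + multiplicity (int p) (int y) + multiplicity (int p) (int (x + y))"
proof -
  have pe: "prime_elem (int p)" using pp_int[OF pp] by (simp add: prime_imp_prime_elem)
  show ?thesis using assms
    by (simp add: prime_elem_multiplicity_mult_distrib[OF pe] del: of_nat_add)
qed

lemma nat_int_minus1: "m > 0 \<Longrightarrow> nat (int m - 1) = m - 1"
  by (cases m) auto

lemma cb_neg: "n < 0 \<Longrightarrow> 0 \<le> k \<Longrightarrow> cb n k = (-1) ^ nat k * real (nat (k - n - 1) choose nat k)"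
  unfolding cb_def by auto

definition Tv :: "nat \<Rightarrow> nat \<Rightarrow> nat \<Rightarrow> real" where
  "Tv q x y = real ((x + y) * q choose (x * q)) / real (x + y choose x)"

lemma pos_case1:
  assumes "x > 0" "y > 0"
  shows "ibinom (int (x + y) * int p) (int x * int p) / ibinom (int (x + y)) (int x) = Tv p x y"
proof -
  have e1: "int (x + y) * int p = int ((x + y) * p)" "int x * int p = int (x * p)" by simp_all
  have "x * p \<le> (x + y) * p" by simp
  hence "ibinom (int (x + y) * int p) (int x * int p) = real ((x + y) * p choose (x * p))"
    unfolding e1 ibinom_cb cb_def by (simp only: of_nat_le_iff of_nat_0_le_iff nat_int if_True simp_thms)
  moreover have "ibinom (int (x + y)) (int x) = real (x + y choose x)"
    unfolding ibinom_cb cb_def by (simp del: of_nat_add)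
  ultimately show ?thesis by (simp add: Tv_def)
qed

lemma neg_case:
  assumes "x > 0" "y > 0"
  shows "ibinom (- int y * int p) (int x * int p) / ibinom (- int y) (int x) = (-1) ^ (x * (p - 1)) * Tv p x y"
proof -
  let ?M = "x + y"
  have Mp: "?M * p > 0" using assms p_pos by simp
  have b1: "ibinom (- int y * int p) (int x * int p) = (-1) ^ (x * p) * real (?M * p - 1 choose (x * p))"
  proof -
    have ng: "- int y * int p < 0" "0 \<le> int x * int p" using assms p_pos by (simp_all add: mult_pos_pos)
    have "ibinom (- int y * int p) (int x * int p) = (-1) ^ nat (int x * int p) *
        real (nat (int x * int p - - int y * int p - 1) choose nat (int x * int p))"
      unfolding ibinom_cb by (rule cb_neg[OF ng])
    moreover have "nat (int x * int p) = x * p" by (simp add: nat_mult_distrib)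
    moreover have "nat (int x * int p - - int y * int p - 1) = ?M * p - 1"
    proof -
      have "int x * int p - - int y * int p - 1 = int (?M * p) - 1" by (simp add: algebra_simps)
      moreover have "nat (int (?M * p) - 1) = ?M * p - 1" by (rule nat_int_minus1[OF Mp])
      ultimately show ?thesis by simp
    qed
    ultimately show ?thesis by simp
  qed
  have b2: "ibinom (- int y) (int x) = (-1) ^ x * real (?M - 1 choose x)"
  proof -
    have "nat (int x - - int y - 1) = ?M - 1" by simp
    thus ?thesis unfolding ibinom_cb cb_def using assms by simp
  qed
  have abs: "real (n - 1 choose k) = real (n choose k) * real (n - k) / real n" if "n > 0" for n k
  proof -
    have "real ((n - k) * (n choose k)) = real (n * (n - 1 choose k))" by (simp only: binomial_absorb_comp)
    thus ?thesis using that by (simp add: field_simps)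
  qed
  have r1: "real (?M * p - 1 choose (x * p)) = real (?M * p choose (x * p)) * real (y * p) / real (?M * p)"
  proof -
    have "real (?M * p - 1 choose (x * p)) = real (?M * p choose (x * p)) * real (?M * p - x * p) / real (?M * p)"
      by (rule abs[OF Mp])
    also have "?M * p - x * p = y * p" by (simp add: algebra_simps)
    finally show ?thesis .
  qed
  have r2: "real (?M - 1 choose x) = real (?M choose x) * real y / real ?M"
    using abs[of ?M x] assms by simp
  have nz: "real (?M choose x) \<noteq> 0" by simp
  have sgn: "(-1::real) ^ (x * p) = (-1) ^ x * (-1) ^ (x * (p - 1))"
  proof -
    have "x * p = x + x * (p - 1)" using p_pos by (cases p) auto
    thus ?thesis by (simp add: power_add)
  qed
  have key: "\<And>s1 s2 A B yy pr MM :: real. s1 \<noteq> 0 \<Longrightarrow> B \<noteq> 0 \<Longrightarrow> yy \<noteq> 0 \<Longrightarrow> pr \<noteq> 0 \<Longrightarrow> MM \<noteq> 0 \<Longrightarrow>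
     s1 * s2 * (A * (yy * pr) / (MM * pr)) / (s1 * (B * yy / MM)) = s2 * (A / B)"
    by (simp add: field_simps)
  show ?thesis unfolding b1 b2 r1 r2 Tv_def sgn of_nat_mult
    by (rule key) (use assms p_pos nz in auto)
qed

end

abbreviation "QQe p a b \<equiv> 3 + multiplicity (int p) (a * b * (a - b)) - multiplicity (int p) (12::int)"
abbreviation "EEe p a b \<equiv> (if p = 2 \<and> even a \<and> odd b then -1 else 1 :: real)"
abbreviation "RRe p a b \<equiv> ibinom (a * int p) (b * int p) / ibinom a b"

lemma c12_le: "prime p \<Longrightarrow> c12 p \<le> 2" by (simp add: c12_def)

lemma posA:
  assumes pp: "prime p" and ab: "0 < b" "b < a"
  shows "pdiv p (QQe p a b) (RRe p a b - EEe p a b)"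
proof -
  define x where "x = nat b"
  define y where "y = nat (a - b)"
  have xy: "x > 0" "y > 0" "a = int (x + y)" "b = int x" using ab by (auto simp: x_def y_def)
  have R: "RRe p a b = Tv p x y" unfolding xy(3,4) by (rule pos_case1[OF pp xy(1,2)])
  have E: "EEe p a b = (if p = 2 \<and> odd x \<and> odd y then -1 else 1)" unfolding xy(3,4) by auto
  have "a * b * (a - b) = int x * int y * int (x + y)" unfolding xy(3,4) by (simp add: algebra_simps)
  hence e2: "multiplicity (int p) (a * b * (a - b)) = multiplicity (int p) (int x) + multiplicity (int p) (int y)
        + multiplicity (int p) (int (x + y))" using mult3[OF pp xy(1,2)] by (simp only:)
  have Q: "QQe p a b = 3 - c12 p + multiplicity (int p) (int x) + multiplicity (int p) (int y)
        + multiplicity (int p) (int (x + y))"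
    unfolding e2 mult12[OF pp] using c12_le[OF pp] by arith
  show ?thesis unfolding R E Q Tv_def[OF pp] by (rule core_T[OF pp xy(1,2)])
qed

lemma negB:
  assumes pp: "prime p" and ab: "a < 0" "0 < b"
  shows "pdiv p (QQe p a b) (RRe p a b - EEe p a b)"
proof -
  define x where "x = nat b"
  define y where "y = nat (- a)"
  have xy: "x > 0" "y > 0" "a = - int y" "b = int x" using ab by (auto simp: x_def y_def)
  have R: "RRe p a b = (-1) ^ (x * (p - 1)) * Tv p x y" unfolding xy(3,4) by (rule neg_case[OF pp xy(1,2)])
  have "a * b * (a - b) = int x * int y * int (x + y)" unfolding xy(3,4) by (simp add: algebra_simps)
  hence e2: "multiplicity (int p) (a * b * (a - b)) = multiplicity (int p) (int x) + multiplicity (int p) (int y)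
        + multiplicity (int p) (int (x + y))" using mult3[OF pp xy(1,2)] by (simp only:)
  have Q: "QQe p a b = 3 - c12 p + multiplicity (int p) (int x) + multiplicity (int p) (int y)
        + multiplicity (int p) (int (x + y))"
    unfolding e2 mult12[OF pp] using c12_le[OF pp] by arith
  let ?ET = "(if p = 2 \<and> odd x \<and> odd y then -1 else 1 :: real)"
  have core: "pdiv p (QQe p a b) (Tv p x y - ?ET)" unfolding Q Tv_def[OF pp] by (rule core_T[OF pp xy(1,2)])
  have "RRe p a b - EEe p a b = Tv p x y - ?ET \<or> RRe p a b - EEe p a b = - (Tv p x y - ?ET)"
  proof (cases "p = 2")
    case True
    show ?thesis
    proof (cases "even x")
      case True
      hence "(-1::real) ^ (x * (p - 1)) = 1" using \<open>p = 2\<close> by simp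
      moreover have "EEe p a b = ?ET" using True \<open>p = 2\<close> unfolding xy(3,4) by simp
      ultimately show ?thesis unfolding R by simp
    next
      case False
      hence "(-1::real) ^ (x * (p - 1)) = -1" using \<open>p = 2\<close> by simp
      moreover have "EEe p a b = - ?ET" using False \<open>p = 2\<close> unfolding xy(3,4) by simp
      ultimately show ?thesis unfolding R by simp
    qed
  next
    case False
    have "p > 2" using prime_gt_1_nat[OF pp] False by linarith
    hence "odd p" by (rule prime_odd_nat[OF pp])
    hence "even (x * (p - 1))" by simp
    hence "(-1::real) ^ (x * (p - 1)) = 1" by simp
    thus ?thesis unfolding R using False by simp
  qed
  thus ?thesis
  proof
    assume eq: "RRe p a b - EEe p a b = Tv p x y - ?ET"
    show ?thesis unfolding eq by (rule core)
  next
    assume eq: "RRe p a b - EEe p a b = - (Tv p x y - ?ET)"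
    show ?thesis unfolding eq by (rule pdiv_uminus[OF pp core])
  qed
qed

lemma ibinom_0: "ibinom n 0 = 1"
  unfolding ibinom_cb cb_def by auto

lemma ibinom_Int: "ibinom n k \<in> \<int>"
  unfolding ibinom_cb cb_def by (auto intro!: Ints_mult Ints_power Ints_minus)

lemma nonzero_cases:
  assumes "ibinom a b \<noteq> 0"
  shows "(0 \<le> b \<and> b \<le> a) \<or> (a < 0 \<and> 0 \<le> b) \<or> (a < 0 \<and> b \<le> a)"
proof (rule ccontr)
  assume h: "\<not> ?thesis"
  have "ibinom a b = 0"
  proof (cases "0 \<le> a")
    case True
    show ?thesis
    proof (cases "b < 0")
      case True with \<open>0 \<le> a\<close> show ?thesis by (rule caseD)
    next
      case False
      hence "a < b" using h by auto
      hence "ibinom a (a - b) = 0" using \<open>0 \<le> a\<close> by (intro caseD) auto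
      thus ?thesis by (metis ibinom_sym diff_diff_cancel)
    qed
  next
    case False
    thus ?thesis using h by (intro caseF) auto
  qed
  with assms show False by simp
qed

lemma main_pdiv:
  assumes pp: "prime p" and nz: "ibinom a b \<noteq> 0" and m: "a * b * (a - b) \<noteq> 0"
  shows "pdiv p (QQe p a b) (RRe p a b - EEe p a b)"
proof -
  have a0: "a \<noteq> 0" "b \<noteq> 0" "a \<noteq> b" using m by auto
  consider "0 \<le> b \<and> b \<le> a" | "a < 0 \<and> 0 \<le> b" | "a < 0 \<and> b \<le> a" using nonzero_cases[OF nz] by blast
  thus ?thesis
  proof cases
    case 1 thus ?thesis using a0 by (intro posA[OF pp]) auto
  next
    case 2 thus ?thesis using a0 by (intro negB[OF pp]) auto
  next
    case 3
    define b' where "b' = a - b"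
    have b': "0 < b'" using 3 a0 by (auto simp: b'_def)
    have main: "pdiv p (QQe p a b') (RRe p a b' - EEe p a b')" using 3 b' by (intro negB[OF pp]) auto
    have R: "RRe p a b = RRe p a b'"
    proof -
      have "ibinom (a * int p) (b * int p) = ibinom (a * int p) (a * int p - b * int p)" by (rule ibinom_sym)
      also have "a * int p - b * int p = b' * int p" by (simp add: b'_def algebra_simps)
      finally have "ibinom (a * int p) (b * int p) = ibinom (a * int p) (b' * int p)" .
      moreover have "ibinom a b = ibinom a b'" unfolding b'_def by (rule ibinom_sym)
      ultimately show ?thesis by simp
    qed
    have E: "EEe p a b = EEe p a b'" by (auto simp: b'_def)
    have "a * b * (a - b) = a * b' * (a - b')" by (simp add: b'_def algebra_simps)
    hence Q: "QQe p a b = QQe p a b'" by (simp only:)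
    show ?thesis unfolding R E Q by (rule main)
  qed
qed

theorem lemma5p1:
  fixes p :: nat and a b :: int
  assumes "prime p" and "ibinom a b \<noteq> 0"
  defines "r \<equiv> ibinom (a * int p) (b * int p) / ibinom a b"
      and "\<epsilon> \<equiv> (if p = 2 \<and> even a \<and> odd b then -1 else 1 :: real)"
      and "q \<equiv> 3 + multiplicity (int p) (a * b * (a - b)) - multiplicity (int p) (12::int)"
  shows "r \<in> \<rat> \<and>
    (a * b * (a - b) = 0 \<longrightarrow> r = 1) \<and>
    (a * b * (a - b) \<noteq> 0 \<longrightarrow>
       (\<exists>u v :: int. \<not> int p dvd v \<and> r - \<epsilon> = real p ^ q * (of_int u / of_int v)))"
proof (intro conjI impI)
  show "r \<in> \<rat>" unfolding r_def
    using ibinom_Int[of "a * int p" "b * int p"] ibinom_Int[of a b]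
    by (intro Rats_divide) (auto intro: subsetD[OF Ints_subset_Rats])
next
  assume z: "a * b * (a - b) = 0"
  show "r = 1"
  proof (cases "b = 0 \<or> a = b")
    case True
    thus ?thesis
    proof
      assume "b = 0" thus ?thesis unfolding r_def by (simp add: ibinom_0)
    next
      assume "a = b"
      hence "ibinom a b = 1" "ibinom (a * int p) (b * int p) = 1"
        using ibinom_sym[of a b] ibinom_sym[of "a * int p" "b * int p"] by (auto simp: ibinom_0)
      thus ?thesis unfolding r_def by simp
    qed
  next
    case False
    hence "a = 0" using z by auto
    hence "b = 0" using nonzero_cases[OF assms(2)] by auto
    with False show ?thesis by simp
  qed
next
  assume m: "a * b * (a - b) \<noteq> 0"
  have "pdiv p q (r - \<epsilon>)" unfolding r_def \<epsilon>_def q_def by (rule main_pdiv[OF assms(1,2) m])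
  thus "\<exists>u v :: int. \<not> int p dvd v \<and> r - \<epsilon> = real p ^ q * (of_int u / of_int v)"
    unfolding pdiv_def pint_def by blast
qed

end
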